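(* Call-by-name coupled logical bisimilarity coincides with the contextual equivalences: $(\approx^n_1,\approx^n_2)=(\simeq^n,\cong^n)$. Consequently, both components coincide with each other: $\approx^n_1=\simeq^n=\cong^n=\approx^n_2$.
   Context: $\Lambda^\bullet$ is the set of closed $\lambda$-terms. Contexts are generated by $C::=x\mid[\cdot]\mid C\,C\mid\lambda x.C$, possibly with several holes numbered left to right; $C[\widetilde M]$ fills the $i$-th hole with $M_i$; $C[M]$ fills every hole with $M$. For $\mathcal{R}\subseteq\Lambda^\bullet\times\Lambda^\bullet$, $\mathcal{R}^\star=\{(C[\widetilde M],C[\widetilde N]) : C\text{ a context},\ M_i\,\mathcal{R}\,N_i\ \forall i,\ C[\widetilde M],C[\widetilde N]\in\Lambda^\bullet\}$. Call-by-name reduction on closed terms: $MN\longrightarrow M'N$ if $M\longrightarrow M'$, and $(\lambda x.P)N\longrightarrow P[N/x]$; $\Longrightarrow$ is its reflexive transitive closure; values are closed abstractions; $M{\Downarrow}$ means $M\Longrightarrow V$ for some value $V$. Contextual equivalence: $M\simeq^n N$ iff for all contexts $C$ with $C[M],C[N]$ closed, $C[M]{\Downarrow}\iff C[N]{\Downarrow}$. Evaluation contexts $\mathcal{E}::=[\cdot]\mid\mathcal{E}\,M$ ($M\in\Lambda^\bullet$); $M\cong^n N$ iff for all evaluation contexts $\mathcal{E}$, $\mathcal{E}[M]{\Downarrow}\iff\mathcal{E}[N]{\Downarrow}$. A coupled relation is a pair $(\mathcal{R}_1,\mathcal{R}_2)$ of relations on $\Lambda^\bullet$ with $\mathcal{R}_1\subseteq\mathcal{R}_2$.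 It is a (call-by-name) coupled logical bisimulation if whenever $M\,\mathcal{R}_2\,N$: (1) if $M\longrightarrow M'$ then there is $N'$ with $N\Longrightarrow N'$ and $M'\,\mathcal{R}_2\,N'$; (2) if $M=\lambda x.M'$ then $N\Longrightarrow\lambda x.N'$ for some $N'$ and for all $P,Q\in\Lambda^\bullet$ with $P\,\mathcal{R}_1^\star\,Q$, $M'[P/x]\,\mathcal{R}_2\,N'[Q/x]$; (3) the converses of (1),(2) with $M$ and $N$ exchanged. Coupled logical bisimilarity $(\approx^n_1,\approx^n_2)$ is the componentwise union of all such bisimulations. *)

theory Defs
  imports Main
begin

datatype trm = Var nat | App trm trm | Lam trm

fun closed_at :: "nat \<Rightarrow> trm \<Rightarrow> bool" where
  "closed_at n (Var k) = (k < n)"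
| "closed_at n (App M N) = (closed_at n M \<and> closed_at n N)"
| "closed_at n (Lam M) = closed_at (Suc n) M"

definition closed :: "trm \<Rightarrow> bool" where
  "closed M = closed_at 0 M"

(* substitution of a CLOSED term P for index n (no lifting of P needed since P is closed) *)
fun subst :: "trm \<Rightarrow> nat \<Rightarrow> trm \<Rightarrow> trm" where
  "subst (Var k) n P = (if k < n then Var k else if k = n then P else Var (k - 1))"
| "subst (App M N) n P = App (subst M n P) (subst N n P)"
| "subst (Lam M) n P = Lam (subst M (Suc n) P)"

(* M'[P/x] for the body M' of an abstraction *)
definition inst :: "trm \<Rightarrow> trm \<Rightarrow> trm" where
  "inst M P = subst M 0 P"

datatype ctx = CVar nat | Hole | CApp ctx ctx | CLam ctx

fun nholes :: "ctx \<Rightarrow> nat" where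
  "nholes (CVar k) = 0"
| "nholes Hole = 1"
| "nholes (CApp C D) = nholes C + nholes D"
| "nholes (CLam C) = nholes C"

(* C[M1,...,Mk]: fills the i-th hole (left to right) with the i-th term *)
fun fill :: "ctx \<Rightarrow> trm list \<Rightarrow> trm" where
  "fill (CVar k) Ms = Var k"
| "fill Hole Ms = hd Ms"
| "fill (CApp C D) Ms = App (fill C (take (nholes C) Ms)) (fill D (drop (nholes C) Ms))"
| "fill (CLam C) Ms = Lam (fill C Ms)"

definition fill1 :: "ctx \<Rightarrow> trm \<Rightarrow> trm" where
  "fill1 C M = fill C (replicate (nholes C) M)"

definition ctx_closure :: "trm rel \<Rightarrow> trm rel" where
  "ctx_closure R = {(fill C Ms, fill C Ns) | C Ms Ns.
      length Ms = nholes C \<and> length Ns = nholes C \<and>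
      list_all2 (\<lambda>M N. (M, N) \<in> R) Ms Ns \<and>
      closed (fill C Ms) \<and> closed (fill C Ns)}"

inductive red :: "trm \<Rightarrow> trm \<Rightarrow> bool" where
  red_app: "red M M' \<Longrightarrow> red (App M N) (App M' N)"
| red_beta: "red (App (Lam P) N) (inst P N)"

abbreviation reds :: "trm \<Rightarrow> trm \<Rightarrow> bool" where
  "reds \<equiv> red\<^sup>*\<^sup>*"

definition is_value :: "trm \<Rightarrow> bool" where
  "is_value V = (closed V \<and> (\<exists>B. V = Lam B))"

definition converges :: "trm \<Rightarrow> bool" where
  "converges M = (\<exists>V. reds M V \<and> is_value V)"

definition ctx_equiv :: "trm rel" where
  "ctx_equiv = {(M, N). closed M \<and> closed N \<and>
     (\<forall>C. closed (fill1 C M) \<and> closed (fill1 C N) \<longrightarrow>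
          (converges (fill1 C M) \<longleftrightarrow> converges (fill1 C N)))}"

(* evaluation contexts: E = [.] M1 ... Mk with closed Mi *)
definition eval_ctx_fill :: "trm list \<Rightarrow> trm \<Rightarrow> trm" where
  "eval_ctx_fill Ps M = foldl App M Ps"

definition eval_equiv :: "trm rel" where
  "eval_equiv = {(M, N). closed M \<and> closed N \<and>
     (\<forall>Ps. (\<forall>P\<in>set Ps. closed P) \<longrightarrow>
          (converges (eval_ctx_fill Ps M) \<longleftrightarrow> converges (eval_ctx_fill Ps N)))}"

definition coupled_lb :: "trm rel \<Rightarrow> trm rel \<Rightarrow> bool" where
  "coupled_lb R1 R2 \<longleftrightarrow>
     R1 \<subseteq> R2 \<and> (\<forall>(M, N)\<in>R2. closed M \<and> closed N) \<and>
     (\<forall>M N. (M, N) \<in> R2 \<longrightarrow>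
        (\<forall>M'. red M M' \<longrightarrow> (\<exists>N'. reds N N' \<and> (M', N') \<in> R2)) \<and>
        (\<forall>M'. M = Lam M' \<longrightarrow> (\<exists>N'. reds N (Lam N') \<and>
             (\<forall>P Q. (P, Q) \<in> ctx_closure R1 \<longrightarrow> (inst M' P, inst N' Q) \<in> R2))) \<and>
        (\<forall>N'. red N N' \<longrightarrow> (\<exists>M'. reds M M' \<and> (M', N') \<in> R2)) \<and>
        (\<forall>N'. N = Lam N' \<longrightarrow> (\<exists>M'. reds M (Lam M') \<and>
             (\<forall>P Q. (P, Q) \<in> ctx_closure R1 \<longrightarrow> (inst M' P, inst N' Q) \<in> R2))))"

definition approx1 :: "trm rel" where
  "approx1 = \<Union>{R1. \<exists>R2. coupled_lb R1 R2}"

definition approx2 :: "trm rel" where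
  "approx2 = \<Union>{R2. \<exists>R1. coupled_lb R1 R2}"

end

theory Submission
  imports Defs
begin

lemma closed_at_mono: "closed_at m M \<Longrightarrow> m \<le> k \<Longrightarrow> closed_at k M"
  by (induction M arbitrary: m k) auto

lemma closed_at_any: "closed M \<Longrightarrow> closed_at k M"
  unfolding closed_def using closed_at_mono by blast

lemma subst_closed: "closed_at k M \<Longrightarrow> k \<le> n \<Longrightarrow> subst M n P = M"
  by (induction M arbitrary: k n) auto

lemma closed_subst: "closed_at (Suc k) M \<Longrightarrow> n \<le> k \<Longrightarrow> closed P \<Longrightarrow> closed_at k (subst M n P)"
  by (induction M arbitrary: k n) (auto simp: closed_at_any)

lemma red_closed: "red M M' \<Longrightarrow> closed M \<Longrightarrow> closed M'"
  by (induction rule: red.induct) (auto simp: closed_def inst_def intro: closed_subst)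

lemma reds_closed: "reds M M' \<Longrightarrow> closed M \<Longrightarrow> closed M'"
  by (induction rule: rtranclp_induct) (auto intro: red_closed)

lemma lam_nored: "\<not> red (Lam B) X"
  by (auto elim: red.cases)

lemma red_App_iff: "red (App M N) B \<longleftrightarrow> (\<exists>M'. red M M' \<and> B = App M' N) \<or> (\<exists>P. M = Lam P \<and> B = inst P N)"
proof
  assume "red (App M N) B"
  then show "(\<exists>M'. red M M' \<and> B = App M' N) \<or> (\<exists>P. M = Lam P \<and> B = inst P N)"
    by (cases rule: red.cases) blast+
next
  assume "(\<exists>M'. red M M' \<and> B = App M' N) \<or> (\<exists>P. M = Lam P \<and> B = inst P N)"
  then show "red (App M N) B"
    by (elim disjE exE conjE) (simp_all add: red.red_app red.red_beta)
qed

lemma red_det: "red M A \<Longrightarrow> red M B \<Longrightarrow> A = B"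
proof (induction arbitrary: B rule: red.induct)
  case (red_app M M' N)
  from red_app.prems[unfolded red_App_iff] show ?case
  proof (elim disjE exE conjE)
    fix M2 assume "red M M2" "B = App M2 N"
    then show ?thesis using red_app.IH by simp
  next
    fix P assume "M = Lam P" then show ?thesis using red_app.hyps lam_nored by simp
  qed
next
  case (red_beta P N)
  from red_beta[unfolded red_App_iff] show ?case
  proof (elim disjE exE conjE)
    fix M2 assume "red (Lam P) M2" then show ?thesis using lam_nored by simp
  qed simp
qed

lemma progress_at: "closed_at 0 M \<Longrightarrow> (\<exists>B. M = Lam B) \<or> (\<exists>M'. red M M')"
proof (induction M)
  case (App M1 M2)
  then have "(\<exists>B. M1 = Lam B) \<or> (\<exists>M'. red M1 M')" by simp
  then show ?case by (metis red.red_app red.red_beta)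
qed auto

lemma progress: "closed M \<Longrightarrow> (\<exists>B. M = Lam B) \<or> (\<exists>M'. red M M')"
  using progress_at closed_def by auto

lemma red_foldl: "red M M' \<Longrightarrow> red (foldl App M Ps) (foldl App M' Ps)"
  by (induction Ps arbitrary: M M') (simp_all add: red.red_app)

lemma reds_foldl: "reds M M' \<Longrightarrow> reds (foldl App M Ps) (foldl App M' Ps)"
  by (induction rule: rtranclp_induct) (simp, metis red_foldl rtranclp.rtrancl_into_rtrancl)

lemma closed_foldl: "closed (foldl App M Ps) \<longleftrightarrow> closed M \<and> (\<forall>P\<in>set Ps. closed P)"
  by (induction Ps arbitrary: M) (auto simp: closed_def)

lemma reds_det: "reds M A \<Longrightarrow> reds M B \<Longrightarrow> reds A B \<or> reds B A"
proof (induction arbitrary: B rule: rtranclp_induct)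
  case base then show ?case by auto
next
  case (step y z)
  from step.IH[OF step.prems] show ?case
  proof
    assume "reds y B"
    then show ?thesis
    proof (cases rule: converse_rtranclpE)
      case base then show ?thesis using step by auto
    next
      case (step u)
      then have "u = z" using red_det \<open>red y z\<close> by auto
      then show ?thesis using step by auto
    qed
  next
    assume "reds B y" then show ?thesis using step(2) by (metis rtranclp.rtrancl_into_rtrancl)
  qed
qed

lemma value_nored: "is_value V \<Longrightarrow> \<not> red V X"
  by (auto simp: is_value_def lam_nored)

lemma conv_reds_fwd: "reds M M' \<Longrightarrow> converges M \<Longrightarrow> converges M'"
proof -
  assume a: "reds M M'" "converges M"
  then obtain V where v: "reds M V" "is_value V" by (auto simp: converges_def)
  from reds_det[OF a(1) v(1)] show ?thesis
  proof
    assume "reds M' V" then show ?thesis using v by (auto simp: converges_def)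
  next
    assume "reds V M'"
    then have "M' = V" using value_nored[OF v(2)] by (metis converse_rtranclpE)
    then show ?thesis using v by (auto simp: converges_def)
  qed
qed

lemma conv_reds_bwd: "reds M M' \<Longrightarrow> converges M' \<Longrightarrow> converges M"
  by (auto simp: converges_def intro: rtranclp_trans)

lemma conv_iff_pow: "converges M \<longleftrightarrow> (\<exists>n V. (red^^n) M V \<and> is_value V)"
  by (auto simp: converges_def rtranclp_power)

lemma pow_det: "(red^^n) M V \<Longrightarrow> is_value V \<Longrightarrow> red M M' \<Longrightarrow> \<exists>m. n = Suc m \<and> (red^^m) M' V"
proof (cases n)
  case 0
  assume "(red^^n) M V" "is_value V" "red M M'"
  then show ?thesis using 0 value_nored by auto
next
  case (Suc m)
  assume a: "(red^^n) M V" "red M M'"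
  then have "(red^^(Suc m)) M V" using Suc by simp
  then obtain y where y: "red M y" "(red^^m) y V" by (rule relpowp_Suc_E2)
  have "y = M'" using red_det[OF y(1) a(2)] .
  then have "(red^^m) M' V" using y(2) by simp
  then show ?thesis using Suc by simp
qed


inductive sim :: "trm rel \<Rightarrow> nat \<Rightarrow> trm \<Rightarrow> trm \<Rightarrow> bool" for R where
  sVar: "sim R 0 (Var k) (Var k)"
| sApp: "sim R a M N \<Longrightarrow> sim R b M' N' \<Longrightarrow> sim R (a+b) (App M M') (App N N')"
| sLam: "sim R a M N \<Longrightarrow> sim R a (Lam M) (Lam N)"
| sLeaf: "(M,N) \<in> R \<Longrightarrow> sim R (Suc 0) M N"

inductive simL :: "trm rel \<Rightarrow> nat \<Rightarrow> trm list \<Rightarrow> trm list \<Rightarrow> bool" for R where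
  sNil: "simL R 0 [] []"
| sCons: "sim R a P Q \<Longrightarrow> simL R b Ps Qs \<Longrightarrow> simL R (a+b) (P#Ps) (Q#Qs)"

definition cl :: "trm rel \<Rightarrow> bool" where
  "cl R = (\<forall>(M,N)\<in>R. closed M \<and> closed N)"

lemma sim_refl: "sim R 0 M M"
proof (induction M)
  case (Var x) then show ?case by (rule sVar)
next
  case (App M1 M2) then show ?case using sApp[of R 0 M1 M1 0 M2 M2] by simp
next
  case (Lam M) then show ?case by (rule sLam)
qed

lemma simL_refl: "simL R 0 Ps Ps"
proof (induction Ps)
  case Nil then show ?case by (rule sNil)
next
  case (Cons P Ps) then show ?case using sCons[OF sim_refl[of R P]] by fastforce
qed

lemma sim_closed: "sim R h M N \<Longrightarrow> cl R \<Longrightarrow> closed_at k M = closed_at k N"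
proof (induction arbitrary: k rule: sim.induct)
  case (sLeaf M N)
  then show ?case by (auto simp: cl_def closed_at_any)
qed auto

lemma sim_closed0: "sim R h M N \<Longrightarrow> cl R \<Longrightarrow> closed M = closed N"
  using sim_closed closed_def by blast

lemma simL_closed: "simL R g Ps Qs \<Longrightarrow> cl R \<Longrightarrow> (\<forall>P\<in>set Ps. closed P) \<Longrightarrow> (\<forall>Q\<in>set Qs. closed Q)"
  by (induction rule: simL.induct) (auto dest: sim_closed0)

lemma sim_subst: "sim R h M N \<Longrightarrow> cl R \<Longrightarrow> sim R g P Q \<Longrightarrow> closed P \<Longrightarrow> closed Q \<Longrightarrow>
   \<exists>c. sim R c (subst M k P) (subst N k Q)"
proof (induction arbitrary: k rule: sim.induct)
  case (sVar j)
  then show ?case by (auto intro: sim.sVar)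
next
  case (sApp a M N b M' N')
  then obtain c1 c2 where "sim R c1 (subst M k P) (subst N k Q)" "sim R c2 (subst M' k P) (subst N' k Q)"
    by blast
  then show ?case using sim.sApp by fastforce
next
  case (sLam a M N)
  then obtain c where "sim R c (subst M (Suc k) P) (subst N (Suc k) Q)" by blast
  then show ?case using sim.sLam by fastforce
next
  case (sLeaf M N)
  then have "closed M" "closed N" by (auto simp: cl_def)
  then have "subst M k P = M" "subst N k Q = N" using subst_closed closed_def by auto
  then show ?case using sim.sLeaf[OF sLeaf(1)] by metis
qed

lemma sim_sym: "sim R h M N \<Longrightarrow> sym R \<Longrightarrow> sim R h N M"
  by (induction rule: sim.induct) (auto intro: sim.intros dest: symD)

lemma simL_sym: "simL R h M N \<Longrightarrow> sym R \<Longrightarrow> simL R h N M"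
  by (induction rule: simL.induct) (auto intro: simL.intros dest: sim_sym)

lemma cl_eval: "cl eval_equiv"
  by (auto simp: cl_def eval_equiv_def)

lemma sym_eval: "sym eval_equiv"
  by (auto simp: sym_def eval_equiv_def)

lemma wf_lex3: "wf (less_than <*lex*> less_than <*lex*> less_than)"
  by auto

lemma CL_aux:
  "\<forall>n h g M N Ps Qs V. x = (n, h+g, size M) \<longrightarrow> sim eval_equiv h M N \<longrightarrow> simL eval_equiv g Ps Qs \<longrightarrow>
     closed (foldl App M Ps) \<longrightarrow> (red^^n) (foldl App M Ps) V \<longrightarrow> is_value V \<longrightarrow> converges (foldl App N Qs)"
proof (induction x rule: wf_induct[OF wf_lex3])
  case (1 x)
  show ?case
  proof (intro allI impI)
    fix n h g M N Ps Qs V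
    assume x: "x = (n, h+g, size M)" and sMN: "sim eval_equiv h M N" and sPQ: "simL eval_equiv g Ps Qs"
      and cM: "closed (foldl App M Ps)" and rd: "(red^^n) (foldl App M Ps) V" and vV: "is_value V"
    have IH: "\<And>n' h' g' M' N' Ps' Qs' V'. ((n', h'+g', size M'), x) \<in> less_than <*lex*> less_than <*lex*> less_than \<Longrightarrow>
       sim eval_equiv h' M' N' \<Longrightarrow> simL eval_equiv g' Ps' Qs' \<Longrightarrow> closed (foldl App M' Ps') \<Longrightarrow>
       (red^^n') (foldl App M' Ps') V' \<Longrightarrow> is_value V' \<Longrightarrow> converges (foldl App N' Qs')"
      by (rule 1[rule_format, OF _ refl])
    have cPs: "\<forall>P\<in>set Ps. closed P" and cM0: "closed M" using cM closed_foldl by auto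
    have cQs: "\<forall>Q\<in>set Qs. closed Q" using simL_closed[OF sPQ cl_eval cPs] .
    from sMN show "converges (foldl App N Qs)"
    proof (cases rule: sim.cases)
      case (sVar k)
      then show ?thesis using cM0 by (simp add: closed_def)
    next
      case (sApp a M1 N1 b M2 N2)
      have s2: "simL eval_equiv (b+g) (M2#Ps) (N2#Qs)" using simL.sCons[OF sApp(5) sPQ] .
      have "((n, a+(b+g), size M1), x) \<in> less_than <*lex*> less_than <*lex*> less_than"
        using x sApp by simp
      from IH[OF this sApp(4) s2] show ?thesis using sApp cM rd vV by simp
    next
      case (sLam M' N')
      show ?thesis
      proof (cases Ps)
        case Nil
        then have "Qs = []" using sPQ by (auto elim: simL.cases)
        moreover have "closed N" using sim_closed0[OF sMN cl_eval] cM0 by simp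
        ultimately show ?thesis using sLam by (auto simp: converges_def is_value_def)
      next
        case (Cons P Ps')
        from sPQ[unfolded Cons] obtain c d Q Qs' where qq: "Qs = Q#Qs'" "g = c+d" "sim eval_equiv c P Q"
          "simL eval_equiv d Ps' Qs'" by (auto elim: simL.cases)
        have cP: "closed P" using cPs Cons by simp
        have cQ: "closed Q" using sim_closed0[OF qq(3) cl_eval] cP by simp
        have r1: "red (foldl App M Ps) (foldl App (inst M' P) Ps')"
          using red_foldl[OF red.red_beta[of M' P], of Ps'] sLam Cons by simp
        obtain m where m: "n = Suc m" "(red^^m) (foldl App (inst M' P) Ps') V"
          using pow_det[OF rd vV r1] by blast
        obtain e where se: "sim eval_equiv e (inst M' P) (inst N' Q)"
          using sim_subst[OF sLam(3) cl_eval qq(3) cP cQ] unfolding inst_def by blast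
        have cc: "closed (foldl App (inst M' P) Ps')" using red_closed[OF r1 cM] .
        have "((m, e+d, size (inst M' P)), x) \<in> less_than <*lex*> less_than <*lex*> less_than"
          using x m by simp
        from IH[OF this se qq(4) cc m(2) vV]
        have "converges (foldl App (inst N' Q) Qs')" .
        moreover have "red (foldl App N Qs) (foldl App (inst N' Q) Qs')"
          using red_foldl[OF red.red_beta[of N' Q], of Qs'] sLam qq by simp
        ultimately show ?thesis using conv_reds_bwd by blast
      qed
    next
      case sLeaf
      have "((n, 0+g, size M), x) \<in> less_than <*lex*> less_than <*lex*> less_than"
        using x sLeaf by simp
      from IH[OF this sim_refl sPQ cM rd vV]
      have "converges (foldl App M Qs)" .
      then show ?thesis using sLeaf cQs by (auto simp: eval_equiv_def eval_ctx_fill_def)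
    qed
  qed
qed

lemma CL:
  assumes "sim eval_equiv h M N" "simL eval_equiv g Ps Qs" "closed (foldl App M Ps)"
    "converges (foldl App M Ps)"
  shows "converges (foldl App N Qs)"
proof -
  obtain n V where nV: "(red^^n) (foldl App M Ps) V" "is_value V" using assms(4) conv_iff_pow by blast
  show ?thesis by (rule CL_aux[rule_format, OF refl assms(1) assms(2) assms(3) nV(1) nV(2)])
qed


fun tc :: "trm \<Rightarrow> ctx" where
  "tc (Var k) = CVar k"
| "tc (App M N) = CApp (tc M) (tc N)"
| "tc (Lam M) = CLam (tc M)"

lemma nholes_tc[simp]: "nholes (tc P) = 0"
  by (induction P) auto

lemma fill_tc[simp]: "fill (tc P) Ms = P"
  by (induction P arbitrary: Ms) auto

definition ectx :: "trm list \<Rightarrow> ctx" where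
  "ectx Ps = foldl (\<lambda>C P. CApp C (tc P)) Hole Ps"

lemma ectx_props: "nholes (ectx Ps) = 1 \<and> fill (ectx Ps) [M] = foldl App M Ps"
proof (induction Ps rule: rev_induct)
  case Nil then show ?case by (simp add: ectx_def)
next
  case (snoc P Ps)
  have e: "ectx (Ps @ [P]) = CApp (ectx Ps) (tc P)" by (simp add: ectx_def)
  show ?case using snoc by (simp add: e)
qed

lemma fill1_ectx: "fill1 (ectx Ps) M = foldl App M Ps"
  using ectx_props[of Ps M] by (simp add: fill1_def)

lemma ctx_sub_eval: "ctx_equiv \<subseteq> eval_equiv"
proof
  fix p assume "p \<in> ctx_equiv"
  then obtain M N where p: "p = (M,N)" "closed M" "closed N"
    and h: "\<And>C. closed (fill1 C M) \<and> closed (fill1 C N) \<longrightarrow> (converges (fill1 C M) \<longleftrightarrow> converges (fill1 C N))"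
    by (auto simp: ctx_equiv_def)
  have "converges (eval_ctx_fill Ps M) = converges (eval_ctx_fill Ps N)" if "\<forall>P\<in>set Ps. closed P" for Ps
    using h[of "ectx Ps"] that p by (simp add: fill1_ectx closed_foldl eval_ctx_fill_def)
  then show "p \<in> eval_equiv" using p by (auto simp: eval_equiv_def)
qed

lemma fill_sim: "(M,N) \<in> R \<Longrightarrow> \<exists>h. sim R h (fill C (replicate (nholes C) M)) (fill C (replicate (nholes C) N))"
proof (induction C)
  case (CVar x) then show ?case using sVar by auto
next
  case Hole then show ?case using sLeaf by auto
next
  case (CApp C1 C2)
  then obtain a b where "sim R a (fill C1 (replicate (nholes C1) M)) (fill C1 (replicate (nholes C1) N))"
    "sim R b (fill C2 (replicate (nholes C2) M)) (fill C2 (replicate (nholes C2) N))" by blast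
  then show ?case using sApp by (fastforce simp: take_replicate drop_replicate)
next
  case (CLam C) then show ?case using sLam by fastforce
qed

lemma eval_sub_ctx: "eval_equiv \<subseteq> ctx_equiv"
proof
  fix p assume p0: "p \<in> eval_equiv"
  then obtain M N where p: "p = (M,N)" "closed M" "closed N" by (auto simp: eval_equiv_def)
  have "converges (fill1 C M) = converges (fill1 C N)" if c: "closed (fill1 C M)" "closed (fill1 C N)" for C
  proof -
    obtain h where s: "sim eval_equiv h (fill1 C M) (fill1 C N)"
      using fill_sim[of M N eval_equiv C] p0 p by (auto simp: fill1_def)
    have s': "sim eval_equiv h (fill1 C N) (fill1 C M)" using sim_sym[OF s sym_eval] .
    show ?thesis
      using CL[OF s sNil] CL[OF s' sNil] c by auto
  qed
  then show "p \<in> ctx_equiv" using p by (auto simp: ctx_equiv_def)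
qed

lemma closure_sim: "length Ms = nholes C \<Longrightarrow> length Ns = nholes C \<Longrightarrow> list_all2 (\<lambda>M N. (M,N) \<in> R) Ms Ns \<Longrightarrow>
  \<exists>h. sim R h (fill C Ms) (fill C Ns)"
proof (induction C arbitrary: Ms Ns)
  case (CVar x) then show ?case using sVar by auto
next
  case Hole
  then obtain M N where "Ms = [M]" "Ns = [N]" by (auto simp: length_Suc_conv)
  then show ?case using Hole sLeaf by auto
next
  case (CApp C1 C2)
  have "\<exists>h. sim R h (fill C1 (take (nholes C1) Ms)) (fill C1 (take (nholes C1) Ns))"
    using CApp.IH(1)[of "take (nholes C1) Ms" "take (nholes C1) Ns"] CApp.prems by simp
  moreover have "\<exists>h. sim R h (fill C2 (drop (nholes C1) Ms)) (fill C2 (drop (nholes C1) Ns))"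
    using CApp.IH(2)[of "drop (nholes C1) Ms" "drop (nholes C1) Ns"] CApp.prems by simp
  ultimately show ?case using sApp by fastforce
next
  case (CLam C) then show ?case using sLam by fastforce
qed

lemma closure_simD: "(P,Q) \<in> ctx_closure R \<Longrightarrow> closed P \<and> closed Q \<and> (\<exists>h. sim R h P Q)"
  unfolding ctx_closure_def using closure_sim by blast

lemma id_closure: "closed P \<Longrightarrow> (P,P) \<in> ctx_closure R"
  unfolding ctx_closure_def
  by (rule CollectI, rule exI[of _ "tc P"], rule exI[of _ "[]"], rule exI[of _ "[]"]) simp


definition bis_ok :: "trm rel \<Rightarrow> bool" where
  "bis_ok S = (\<forall>M N. (M,N)\<in>S \<longrightarrow> closed M \<and> closed N \<and>
      (\<forall>M'. red M M' \<longrightarrow> (\<exists>N'. reds N N' \<and> (M',N')\<in>S)) \<and>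
      (\<forall>M'. M = Lam M' \<longrightarrow> (\<exists>N'. reds N (Lam N') \<and> (\<forall>P. closed P \<longrightarrow> (inst M' P, inst N' P) \<in> S))))"

lemma bisim_conv:
  assumes S: "bis_ok S"
  shows "(M,N)\<in>S \<Longrightarrow> \<forall>P\<in>set Ps. closed P \<Longrightarrow> (red^^n) (foldl App M Ps) V \<Longrightarrow> is_value V \<Longrightarrow>
    converges (foldl App N Ps)"
proof (induction n arbitrary: M N Ps V rule: less_induct)
  case (less n M N Ps V)
  have cM: "closed M" using less.prems(1) S by (auto simp: bis_ok_def)
  from progress[OF cM] show ?case
  proof
    assume "\<exists>B. M = Lam B"
    then obtain B where B: "M = Lam B" by blast
    then obtain N' where N': "reds N (Lam N')" "\<forall>P. closed P \<longrightarrow> (inst B P, inst N' P) \<in> S"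
      using less.prems(1) S unfolding bis_ok_def by blast
    show ?thesis
    proof (cases Ps)
      case Nil
      have "closed N" using less.prems(1) S by (auto simp: bis_ok_def)
      then have "closed (Lam N')" using reds_closed N'(1) by blast
      then show ?thesis using N'(1) Nil by (auto simp: converges_def is_value_def)
    next
      case (Cons P Ps')
      have r1: "red (foldl App M Ps) (foldl App (inst B P) Ps')"
        using red_foldl[OF red.red_beta[of B P], of Ps'] B Cons by simp
      obtain m where m: "n = Suc m" "(red^^m) (foldl App (inst B P) Ps') V"
        using pow_det[OF less.prems(3) less.prems(4) r1] by blast
      have cP: "closed P" "\<forall>P\<in>set Ps'. closed P" using less.prems(2) Cons by auto
      have "converges (foldl App (inst N' P) Ps')"
        using less.IH[of m "inst B P" "inst N' P" Ps' V] m N'(2) cP less.prems(4) by auto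
      moreover have "reds (foldl App N Ps) (foldl App (Lam N') Ps)" using reds_foldl[OF N'(1)] .
      moreover have "red (foldl App (Lam N') Ps) (foldl App (inst N' P) Ps')"
        using red_foldl[OF red.red_beta[of N' P], of Ps'] Cons by simp
      ultimately show ?thesis using conv_reds_bwd
        by (meson r_into_rtranclp rtranclp_trans)
    qed
  next
    assume "\<exists>M'. red M M'"
    then obtain M' where M': "red M M'" by blast
    then obtain N' where N': "reds N N'" "(M',N')\<in>S"
      using less.prems(1) S unfolding bis_ok_def by blast
    obtain m where m: "n = Suc m" "(red^^m) (foldl App M' Ps) V"
      using pow_det[OF less.prems(3) less.prems(4) red_foldl[OF M']] by blast
    have "converges (foldl App N' Ps)"
      using less.IH[of m M' N' Ps V] m N'(2) less.prems(2,4) by auto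
    then show ?thesis using conv_reds_bwd reds_foldl[OF N'(1)] by blast
  qed
qed

lemma cpair:
  assumes "coupled_lb R1 R2" "(M,N)\<in>R2"
  shows "closed M" "closed N" "(\<forall>M'. red M M' \<longrightarrow> (\<exists>N'. reds N N' \<and> (M', N') \<in> R2))" "(\<forall>M'. M = Lam M' \<longrightarrow> (\<exists>N'. reds N (Lam N') \<and> (\<forall>P Q. (P, Q) \<in> ctx_closure R1 \<longrightarrow> (inst M' P, inst N' Q) \<in> R2)))" "(\<forall>N'. red N N' \<longrightarrow> (\<exists>M'. reds M M' \<and> (M', N') \<in> R2))" "(\<forall>N'. N = Lam N' \<longrightarrow> (\<exists>M'. reds M (Lam M') \<and> (\<forall>P Q. (P, Q) \<in> ctx_closure R1 \<longrightarrow> (inst M' P, inst N' Q) \<in> R2)))"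
proof -
  have cc: "R1 \<subseteq> R2 \<and> (\<forall>(M, N)\<in>R2. closed M \<and> closed N) \<and> (\<forall>M N. (M, N) \<in> R2 \<longrightarrow> (\<forall>M'. red M M' \<longrightarrow> (\<exists>N'. reds N N' \<and> (M', N') \<in> R2)) \<and> (\<forall>M'. M = Lam M' \<longrightarrow> (\<exists>N'. reds N (Lam N') \<and> (\<forall>P Q. (P, Q) \<in> ctx_closure R1 \<longrightarrow> (inst M' P, inst N' Q) \<in> R2))) \<and> (\<forall>N'. red N N' \<longrightarrow> (\<exists>M'. reds M M' \<and> (M', N') \<in> R2)) \<and> (\<forall>N'. N = Lam N' \<longrightarrow> (\<exists>M'. reds M (Lam M') \<and> (\<forall>P Q. (P, Q) \<in> ctx_closure R1 \<longrightarrow> (inst M' P, inst N' Q) \<in> R2))))"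
    using assms(1) unfolding coupled_lb_def by assumption
  have c2: "\<forall>(M, N)\<in>R2. closed M \<and> closed N" using cc by (rule conjunct1[OF conjunct2])
  have c3: "(\<forall>M N. (M, N) \<in> R2 \<longrightarrow> (\<forall>M'. red M M' \<longrightarrow> (\<exists>N'. reds N N' \<and> (M', N') \<in> R2)) \<and> (\<forall>M'. M = Lam M' \<longrightarrow> (\<exists>N'. reds N (Lam N') \<and> (\<forall>P Q. (P, Q) \<in> ctx_closure R1 \<longrightarrow> (inst M' P, inst N' Q) \<in> R2))) \<and> (\<forall>N'. red N N' \<longrightarrow> (\<exists>M'. reds M M' \<and> (M', N') \<in> R2)) \<and> (\<forall>N'. N = Lam N' \<longrightarrow> (\<exists>M'. reds M (Lam M') \<and> (\<forall>P Q. (P, Q) \<in> ctx_closure R1 \<longrightarrow> (inst M' P, inst N' Q) \<in> R2))))" using cc by (rule conjunct2[OF conjunct2])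
  show "closed M" "closed N" using c2 assms(2) by auto
  have x: "(\<forall>M'. red M M' \<longrightarrow> (\<exists>N'. reds N N' \<and> (M', N') \<in> R2)) \<and> (\<forall>M'. M = Lam M' \<longrightarrow> (\<exists>N'. reds N (Lam N') \<and> (\<forall>P Q. (P, Q) \<in> ctx_closure R1 \<longrightarrow> (inst M' P, inst N' Q) \<in> R2))) \<and> (\<forall>N'. red N N' \<longrightarrow> (\<exists>M'. reds M M' \<and> (M', N') \<in> R2)) \<and> (\<forall>N'. N = Lam N' \<longrightarrow> (\<exists>M'. reds M (Lam M') \<and> (\<forall>P Q. (P, Q) \<in> ctx_closure R1 \<longrightarrow> (inst M' P, inst N' Q) \<in> R2)))" using c3 assms(2) by blast
  show "(\<forall>M'. red M M' \<longrightarrow> (\<exists>N'. reds N N' \<and> (M', N') \<in> R2))" using x by blast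
  show "(\<forall>M'. M = Lam M' \<longrightarrow> (\<exists>N'. reds N (Lam N') \<and> (\<forall>P Q. (P, Q) \<in> ctx_closure R1 \<longrightarrow> (inst M' P, inst N' Q) \<in> R2)))" using x by blast
  show "(\<forall>N'. red N N' \<longrightarrow> (\<exists>M'. reds M M' \<and> (M', N') \<in> R2))" using x by blast
  show "(\<forall>N'. N = Lam N' \<longrightarrow> (\<exists>M'. reds M (Lam M') \<and> (\<forall>P Q. (P, Q) \<in> ctx_closure R1 \<longrightarrow> (inst M' P, inst N' Q) \<in> R2)))" using x by blast
qed

lemma bis_ok_R2: assumes c: "coupled_lb R1 R2" shows "bis_ok R2"
  unfolding bis_ok_def
proof (intro allI impI)
  fix M N assume mn: "(M,N) \<in> R2"
  note cp = cpair[OF c mn]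
  have Y: "\<forall>M'. M = Lam M' \<longrightarrow> (\<exists>N'. reds N (Lam N') \<and> (\<forall>P. closed P \<longrightarrow> (inst M' P, inst N' P) \<in> R2))"
  proof (intro allI impI)
    fix M' assume "M = Lam M'"
    then obtain N' where "reds N (Lam N')" "\<forall>P Q. (P, Q) \<in> ctx_closure R1 \<longrightarrow> (inst M' P, inst N' Q) \<in> R2"
      using cp(4) by blast
    then show "\<exists>N'. reds N (Lam N') \<and> (\<forall>P. closed P \<longrightarrow> (inst M' P, inst N' P) \<in> R2)"
      using id_closure by blast
  qed
  show "closed M \<and> closed N \<and> (\<forall>M'. red M M' \<longrightarrow> (\<exists>N'. reds N N' \<and> (M', N') \<in> R2)) \<and> (\<forall>M'. M = Lam M' \<longrightarrow> (\<exists>N'. reds N (Lam N') \<and> (\<forall>P. closed P \<longrightarrow> (inst M' P, inst N' P) \<in> R2)))"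
    using cp(1,2,3) Y by blast
qed

lemma bis_ok_R2c: assumes c: "coupled_lb R1 R2" shows "bis_ok (R2\<inverse>)"
  unfolding bis_ok_def
proof (intro allI impI)
  fix N M assume mn0: "(N,M) \<in> R2\<inverse>"
  then have mn: "(M,N) \<in> R2" by simp
  note cp = cpair[OF c mn]
  have Y: "\<forall>N'. N = Lam N' \<longrightarrow> (\<exists>M'. reds M (Lam M') \<and> (\<forall>P. closed P \<longrightarrow> (inst N' P, inst M' P) \<in> R2\<inverse>))"
  proof (intro allI impI)
    fix N' assume "N = Lam N'"
    then obtain M' where "reds M (Lam M')" "\<forall>P Q. (P, Q) \<in> ctx_closure R1 \<longrightarrow> (inst M' P, inst N' Q) \<in> R2"
      using cp(6) by blast
    then show "\<exists>M'. reds M (Lam M') \<and> (\<forall>P. closed P \<longrightarrow> (inst N' P, inst M' P) \<in> R2\<inverse>)"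
      using id_closure by blast
  qed
  have X: "\<forall>N'. red N N' \<longrightarrow> (\<exists>M'. reds M M' \<and> (N', M') \<in> R2\<inverse>)" using cp(5) by auto
  show "closed N \<and> closed M \<and> (\<forall>N'. red N N' \<longrightarrow> (\<exists>M'. reds M M' \<and> (N', M') \<in> R2\<inverse>)) \<and> (\<forall>N'. N = Lam N' \<longrightarrow> (\<exists>M'. reds M (Lam M') \<and> (\<forall>P. closed P \<longrightarrow> (inst N' P, inst M' P) \<in> R2\<inverse>)))"
    using cp(1,2) X Y by blast
qed

lemma bis_ok_eval: "bis_ok S \<Longrightarrow> bis_ok (S\<inverse>) \<Longrightarrow> S \<subseteq> eval_equiv"
proof
  fix p assume S: "bis_ok S" "bis_ok (S\<inverse>)" and p0: "p \<in> S"
  obtain M N where p1: "p = (M,N)" by (cases p)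
  then have p: "p = (M,N)" "closed M" "closed N" using S(1) p0 unfolding bis_ok_def by auto
  have "converges (foldl App M Ps) = converges (foldl App N Ps)" if c: "\<forall>P\<in>set Ps. closed P" for Ps
  proof
    assume "converges (foldl App M Ps)"
    then obtain n V where "(red^^n) (foldl App M Ps) V" "is_value V" using conv_iff_pow by blast
    then show "converges (foldl App N Ps)" using bisim_conv[OF S(1)] p0 p c by blast
  next
    assume "converges (foldl App N Ps)"
    then obtain n V where "(red^^n) (foldl App N Ps) V" "is_value V" using conv_iff_pow by blast
    moreover have "(N,M) \<in> S\<inverse>" using p0 p by simp
    ultimately show "converges (foldl App M Ps)" using bisim_conv[OF S(2)] c by blast
  qed
  then show "p \<in> eval_equiv" using p by (auto simp: eval_equiv_def eval_ctx_fill_def)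
qed

lemma approx2_sub: "approx2 \<subseteq> eval_equiv"
proof
  fix p assume "p \<in> approx2"
  then obtain R1 R2 where c: "coupled_lb R1 R2" and p: "p \<in> R2" unfolding approx2_def by blast
  show "p \<in> eval_equiv" using bis_ok_eval[OF bis_ok_R2[OF c] bis_ok_R2c[OF c]] p by blast
qed


lemma eval_symD: "(M,N) \<in> eval_equiv \<Longrightarrow> (N,M) \<in> eval_equiv"
  by (auto simp: eval_equiv_def)

lemma ev_red: assumes e: "(M,N) \<in> eval_equiv" and r: "red M M'" shows "(M',N) \<in> eval_equiv"
proof -
  have cM: "closed M" "closed N" using e by (auto simp: eval_equiv_def)
  have cM': "closed M'" using red_closed[OF r cM(1)] .
  have "converges (foldl App M' Ps) = converges (foldl App N Ps)" if c: "\<forall>P\<in>set Ps. closed P" for Ps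
  proof -
    have "converges (foldl App M' Ps) = converges (foldl App M Ps)"
      using conv_reds_fwd conv_reds_bwd r_into_rtranclp[where r=red, OF red_foldl[OF r, of Ps]] by blast
    also have "\<dots> = converges (foldl App N Ps)" using e c by (auto simp: eval_equiv_def eval_ctx_fill_def)
    finally show ?thesis .
  qed
  then show ?thesis using cM cM' by (auto simp: eval_equiv_def eval_ctx_fill_def)
qed

lemma ev_lam: assumes e: "(M,N) \<in> eval_equiv" and hML: "M = Lam M'"
  shows "\<exists>N'. reds N (Lam N') \<and> (\<forall>P Q h. closed P \<longrightarrow> closed Q \<longrightarrow> sim eval_equiv h P Q \<longrightarrow>
     (inst M' P, inst N' Q) \<in> eval_equiv)"
proof -
  have cM: "closed M" "closed N" using e by (auto simp: eval_equiv_def)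
  have "converges M" using cM hML by (auto simp: converges_def is_value_def)
  moreover have "converges (eval_ctx_fill [] M) = converges (eval_ctx_fill [] N)"
    using e unfolding eval_equiv_def by auto
  ultimately have "converges N" by (simp add: eval_ctx_fill_def)
  then obtain V where V: "reds N V" "is_value V" by (auto simp: converges_def)
  then obtain N' where N': "V = Lam N'" by (auto simp: is_value_def)
  have cN': "closed_at (Suc 0) N'" using V N' by (simp add: is_value_def closed_def)
  have cM': "closed_at (Suc 0) M'" using cM hML by (simp add: closed_def)
  have rN: "reds N (Lam N')" using V N' by simp
  have main: "(inst M' P, inst N' Q) \<in> eval_equiv"
    if cP: "closed P" and cQ: "closed Q" and s: "sim eval_equiv h P Q" for P Q h
  proof -
    have ciMP: "closed (inst M' P)" using closed_subst[OF cM', of 0 P] cP by (simp add: inst_def closed_def)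
    have ciMQ: "closed (inst M' Q)" using closed_subst[OF cM', of 0 Q] cQ by (simp add: inst_def closed_def)
    have ciNQ: "closed (inst N' Q)" using closed_subst[OF cN', of 0 Q] cQ by (simp add: inst_def closed_def)
    obtain k where sMM: "sim eval_equiv k (inst M' P) (inst M' Q)"
      using sim_subst[OF sim_refl cl_eval s cP cQ] unfolding inst_def by blast
    have sMM': "sim eval_equiv k (inst M' Q) (inst M' P)" using sim_sym[OF sMM sym_eval] .
    have "converges (foldl App (inst M' P) Ps) = converges (foldl App (inst N' Q) Ps)"
      if c: "\<forall>P\<in>set Ps. closed P" for Ps
    proof -
      have rM: "red (foldl App M (Q#Ps)) (foldl App (inst M' Q) Ps)"
        using red_foldl[OF red.red_beta[of M' Q], of Ps] hML by simp
      have rN2: "reds (foldl App N (Q#Ps)) (foldl App (inst N' Q) Ps)"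
      proof -
        have "reds (foldl App N (Q#Ps)) (foldl App (Lam N') (Q#Ps))" using reds_foldl[OF rN] .
        moreover have "red (foldl App (Lam N') (Q#Ps)) (foldl App (inst N' Q) Ps)"
          using red_foldl[OF red.red_beta[of N' Q], of Ps] by simp
        ultimately show ?thesis by (rule rtranclp.rtrancl_into_rtrancl)
      qed
      have cQPs: "\<forall>P\<in>set (Q#Ps). closed P" using c cQ by simp
      have eMN: "converges (foldl App M (Q#Ps)) = converges (foldl App N (Q#Ps))"
      proof -
        have "\<forall>Ps. (\<forall>P\<in>set Ps. closed P) \<longrightarrow> (converges (eval_ctx_fill Ps M) \<longleftrightarrow> converges (eval_ctx_fill Ps N))"
          using e unfolding eval_equiv_def by blast
        then have "converges (eval_ctx_fill (Q#Ps) M) \<longleftrightarrow> converges (eval_ctx_fill (Q#Ps) N)"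
          using cQPs by blast
        then show ?thesis unfolding eval_ctx_fill_def .
      qed
      show ?thesis
      proof
        assume "converges (foldl App (inst M' P) Ps)"
        then have "converges (foldl App (inst M' Q) Ps)"
          using CL[OF sMM simL_refl] ciMP c by (simp add: closed_foldl)
        then have "converges (foldl App M (Q#Ps))" using conv_reds_bwd r_into_rtranclp[where r=red, OF rM] by blast
        then have "converges (foldl App N (Q#Ps))" using eMN by simp
        then show "converges (foldl App (inst N' Q) Ps)" using conv_reds_fwd rN2 by blast
      next
        assume "converges (foldl App (inst N' Q) Ps)"
        then have "converges (foldl App N (Q#Ps))" using conv_reds_bwd rN2 by blast
        then have "converges (foldl App M (Q#Ps))" using eMN by simp
        then have "converges (foldl App (inst M' Q) Ps)" using conv_reds_fwd r_into_rtranclp[where r=red, OF rM] by blast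
        then show "converges (foldl App (inst M' P) Ps)"
          using CL[OF sMM' simL_refl] ciMQ c by (simp add: closed_foldl)
      qed
    qed
    moreover have "closed (inst N' Q)" using ciNQ .
    ultimately show ?thesis using ciMP by (auto simp: eval_equiv_def eval_ctx_fill_def)
  qed
  show ?thesis using rN main by blast
qed

lemma coupled_eval: "coupled_lb eval_equiv eval_equiv"
  unfolding coupled_lb_def
proof (intro conjI allI impI)
  show "eval_equiv \<subseteq> eval_equiv" by simp
  show "\<forall>(M, N)\<in>eval_equiv. closed M \<and> closed N" by (auto simp: eval_equiv_def)
next
  fix M N M' assume e: "(M,N) \<in> eval_equiv" and r: "red M M'"
  show "\<exists>N'. reds N N' \<and> (M', N') \<in> eval_equiv" using ev_red[OF e r] by blast
next
  fix M N M' assume e: "(M,N) \<in> eval_equiv" and hML: "M = Lam M'"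
  obtain N' where N': "reds N (Lam N')" "\<forall>P Q h. closed P \<longrightarrow> closed Q \<longrightarrow> sim eval_equiv h P Q \<longrightarrow>
     (inst M' P, inst N' Q) \<in> eval_equiv" using ev_lam[OF e hML] by blast
  have "(inst M' P, inst N' Q) \<in> eval_equiv" if "(P,Q) \<in> ctx_closure eval_equiv" for P Q
    using closure_simD[OF that] N'(2) by blast
  then show "\<exists>N'. reds N (Lam N') \<and> (\<forall>P Q. (P, Q) \<in> ctx_closure eval_equiv \<longrightarrow> (inst M' P, inst N' Q) \<in> eval_equiv)"
    using N'(1) by blast
next
  fix M N N' assume e: "(M,N) \<in> eval_equiv" and r: "red N N'"
  have "(N',M) \<in> eval_equiv" using ev_red[OF eval_symD[OF e] r] .
  then show "\<exists>M'. reds M M' \<and> (M', N') \<in> eval_equiv" using eval_symD by blast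
next
  fix M N N' assume e: "(M,N) \<in> eval_equiv" and NL: "N = Lam N'"
  obtain M' where M': "reds M (Lam M')" "\<forall>P Q h. closed P \<longrightarrow> closed Q \<longrightarrow> sim eval_equiv h P Q \<longrightarrow>
     (inst N' P, inst M' Q) \<in> eval_equiv" using ev_lam[OF eval_symD[OF e] NL] by blast
  have "(inst M' P, inst N' Q) \<in> eval_equiv" if pq: "(P,Q) \<in> ctx_closure eval_equiv" for P Q
  proof -
    obtain h where c: "closed P" "closed Q" "sim eval_equiv h P Q" using closure_simD[OF pq] by blast
    have "(inst N' Q, inst M' P) \<in> eval_equiv" using M'(2) c sim_sym[OF c(3) sym_eval] by blast
    then show ?thesis by (rule eval_symD)
  qed
  then show "\<exists>M'. reds M (Lam M') \<and> (\<forall>P Q. (P, Q) \<in> ctx_closure eval_equiv \<longrightarrow> (inst M' P, inst N' Q) \<in> eval_equiv)"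
    using M'(1) by blast
qed

lemma eval_sub_approx1: "eval_equiv \<subseteq> approx1"
  unfolding approx1_def using coupled_eval by blast

lemma approx1_sub: "approx1 \<subseteq> approx2"
proof
  fix p assume "p \<in> approx1"
  then obtain R1 R2 where c: "coupled_lb R1 R2" and p: "p \<in> R1" unfolding approx1_def by blast
  have "R1 \<subseteq> R2" using c unfolding coupled_lb_def by (elim conjE)
  then have "p \<in> R2" using p by blast
  then show "p \<in> approx2" unfolding approx2_def using c by blast
qed

theorem mainTheorem8:
  shows "(approx1, approx2) = (ctx_equiv, eval_equiv) \<and>
         approx1 = ctx_equiv \<and> ctx_equiv = eval_equiv \<and> eval_equiv = approx2"
proof -
  have a1: "approx1 = eval_equiv" using approx1_sub approx2_sub eval_sub_approx1 by blast
  have a2: "approx2 = eval_equiv" using approx1_sub approx2_sub eval_sub_approx1 by blast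
  have c: "ctx_equiv = eval_equiv" using ctx_sub_eval eval_sub_ctx by blast
  show ?thesis using a1 a2 c by simp
qed

end
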